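(* If $P\in\{0,1\}^{k\times\ell}$ is a pattern with (at most) two nonempty rows, more precisely with exactly two nonempty rows, then $P$ is row-bounding, i.e., $\mathrm{Av}(P)$ is row-bounded.
   Context: All matrices are binary; rows numbered top to bottom, columns left to right; a row is nonempty if it contains a 1-entry. $(a,b]=\{a+1,\dots,b\}$. A pattern $P\in\{0,1\}^{k\times\ell}$ is an interval minor of $M\in\{0,1\}^{m\times n}$ if there are integers $0=r_0<\dots<r_k=m$ and $0=c_0<\dots<c_\ell=n$ such that for each 1-entry $(i,j)$ of $P$ the submatrix of $M$ on rows $(r_{i-1},r_i]$ and columns $(c_{j-1},c_j]$ contains a 1-entry; otherwise $M$ avoids $P$. $\mathrm{Av}(P)$ is the set of binary matrices avoiding $P$. $M\in\mathrm{Av}(P)$ is critical if changing any single 0-entry of $M$ to a 1-entry produces a matrix containing $P$. A horizontal 0-run is a maximal set of consecutive 0-entries within one row; the complexity of a row is the number of such runs in it. $\mathrm{Av}(P)$ is row-bounded (and $P$ row-bounding) if there is a constant bounding the complexity of every row of every critical matrix in $\mathrm{Av}(P)$. *)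

theory Defs
  imports Main
begin

text \<open>A binary matrix with m rows and n columns is represented by a function
  M :: nat => nat => bool together with its dimensions; entry (i,j), 0-indexed
  with i < m and j < n, is a 1-entry iff M i j. Values outside the range are ignored.\<close>

type_synonym bmat = "nat \<Rightarrow> nat \<Rightarrow> bool"

text \<open>P (k x l) is an interval minor of M (m x n): there are 0 = r 0 < ... < r k = m
  and 0 = c 0 < ... < c l = n such that for each 1-entry (i,j) of P the block
  of rows [r i, r (i+1)) and columns [c j, c (j+1)) contains a 1-entry (0-indexed version
  of the half-open intervals (r_{i-1}, r_i]).\<close>

definition contains :: "bmat \<Rightarrow> nat \<Rightarrow> nat \<Rightarrow> bmat \<Rightarrow> nat \<Rightarrow> nat \<Rightarrow> bool" where
  "contains P k l M m n \<longleftrightarrow>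
     (\<exists>r c :: nat \<Rightarrow> nat.
        r 0 = 0 \<and> r k = m \<and> (\<forall>i<k. r i < r (Suc i)) \<and>
        c 0 = 0 \<and> c l = n \<and> (\<forall>j<l. c j < c (Suc j)) \<and>
        (\<forall>i<k. \<forall>j<l. P i j \<longrightarrow>
           (\<exists>a b. r i \<le> a \<and> a < r (Suc i) \<and> c j \<le> b \<and> b < c (Suc j) \<and> M a b)))"

definition avoids :: "bmat \<Rightarrow> nat \<Rightarrow> nat \<Rightarrow> bmat \<Rightarrow> nat \<Rightarrow> nat \<Rightarrow> bool" where
  "avoids P k l M m n \<longleftrightarrow> \<not> contains P k l M m n"

definition set_one :: "bmat \<Rightarrow> nat \<Rightarrow> nat \<Rightarrow> bmat" where
  "set_one M a b = M(a := (M a)(b := True))"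

definition critical :: "bmat \<Rightarrow> nat \<Rightarrow> nat \<Rightarrow> bmat \<Rightarrow> nat \<Rightarrow> nat \<Rightarrow> bool" where
  "critical P k l M m n \<longleftrightarrow> avoids P k l M m n \<and>
     (\<forall>a<m. \<forall>b<n. \<not> M a b \<longrightarrow> contains P k l (set_one M a b) m n)"

text \<open>Complexity of row a of an m x n matrix: the number of horizontal 0-runs,
  counted by their leftmost entries.\<close>

definition row_complexity :: "bmat \<Rightarrow> nat \<Rightarrow> nat \<Rightarrow> nat" where
  "row_complexity M n a = card {b. b < n \<and> \<not> M a b \<and> (b = 0 \<or> M a (b - 1))}"

definition row_bounding :: "bmat \<Rightarrow> nat \<Rightarrow> nat \<Rightarrow> bool" where
  "row_bounding P k l \<longleftrightarrow>
     (\<exists>C::nat. \<forall>M m n. critical P k l M m n \<longrightarrow> (\<forall>a<m. row_complexity M n a \<le> C))"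

definition nonempty_row :: "bmat \<Rightarrow> nat \<Rightarrow> nat \<Rightarrow> bool" where
  "nonempty_row P l i \<longleftrightarrow> (\<exists>j<l. P i j)"

end

theory Submission
  imports Defs
begin

definition fits :: "bmat \<Rightarrow> nat \<Rightarrow> bmat \<Rightarrow> (nat \<Rightarrow> nat) \<Rightarrow> nat \<Rightarrow> nat \<Rightarrow> nat \<Rightarrow> bool" where
  "fits P k M r t x x' \<longleftrightarrow> (\<forall>i<k. P i t \<longrightarrow> (\<exists>a b. r i \<le> a \<and> a < r (Suc i) \<and> x \<le> b \<and> b < x' \<and> M a b))"

definition realz :: "bmat \<Rightarrow> nat \<Rightarrow> bmat \<Rightarrow> (nat \<Rightarrow> nat) \<Rightarrow> nat \<Rightarrow> nat \<Rightarrow> nat \<Rightarrow> nat \<Rightarrow> bool" where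
  "realz P k M r t0 t1 x x' \<longleftrightarrow> t0 \<le> t1 \<and> (\<exists>c::nat\<Rightarrow>nat. c t0 = x \<and> c t1 = x' \<and>
      (\<forall>t. t0 \<le> t \<and> t < t1 \<longrightarrow> c t < c (Suc t) \<and> fits P k M r t (c t) (c (Suc t))))"

definition validr :: "nat \<Rightarrow> nat \<Rightarrow> (nat \<Rightarrow> nat) \<Rightarrow> bool" where
  "validr k m r \<longleftrightarrow> r 0 = 0 \<and> r k = m \<and> (\<forall>i<k. r i < r (Suc i))"

lemma contains_iff: "contains P k l M m n \<longleftrightarrow> (\<exists>r. validr k m r \<and> realz P k M r 0 l 0 n)"
proof
  assume "contains P k l M m n"
  then obtain r c where h: "r 0 = 0 \<and> r k = m \<and> (\<forall>i<k. r i < r (Suc i)) \<and>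
        c 0 = 0 \<and> c l = n \<and> (\<forall>j<l. c j < c (Suc j)) \<and>
        (\<forall>i<k. \<forall>j<l. P i j \<longrightarrow>
           (\<exists>a b. r i \<le> a \<and> a < r (Suc i) \<and> c j \<le> b \<and> b < c (Suc j) \<and> M a b))"
    unfolding contains_def by blast
  hence "validr k m r" unfolding validr_def by blast
  moreover have "realz P k M r 0 l 0 n" unfolding realz_def fits_def using h by auto
  ultimately show "\<exists>r. validr k m r \<and> realz P k M r 0 l 0 n" by blast
next
  assume "\<exists>r. validr k m r \<and> realz P k M r 0 l 0 n"
  then obtain r c where v: "validr k m r" and h: "c 0 = 0" "c l = n"
    "\<forall>t. 0 \<le> t \<and> t < l \<longrightarrow> c t < c (Suc t) \<and> fits P k M r t (c t) (c (Suc t))"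
    unfolding realz_def by blast
  show "contains P k l M m n" unfolding contains_def
    apply (rule exI[of _ r], rule exI[of _ c])
    using v h unfolding validr_def fits_def by auto
qed

lemma realz_concat:
  assumes A: "realz P k M r t0 t1 x y" and B: "realz P k M r t1 t2 y w"
  shows "realz P k M r t0 t2 x w"
proof -
  from A obtain c1 where c1: "t0 \<le> t1" "c1 t0 = x" "c1 t1 = y"
    "\<forall>t. t0 \<le> t \<and> t < t1 \<longrightarrow> c1 t < c1 (Suc t) \<and> fits P k M r t (c1 t) (c1 (Suc t))"
    unfolding realz_def by blast
  from B obtain c2 where c2: "t1 \<le> t2" "c2 t1 = y" "c2 t2 = w"
    "\<forall>t. t1 \<le> t \<and> t < t2 \<longrightarrow> c2 t < c2 (Suc t) \<and> fits P k M r t (c2 t) (c2 (Suc t))"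
    unfolding realz_def by blast
  define c where "c = (\<lambda>t. if t \<le> t1 then c1 t else c2 t)"
  have "\<forall>t. t0 \<le> t \<and> t < t2 \<longrightarrow> c t < c (Suc t) \<and> fits P k M r t (c t) (c (Suc t))"
  proof (intro allI impI)
    fix t assume t: "t0 \<le> t \<and> t < t2"
    show "c t < c (Suc t) \<and> fits P k M r t (c t) (c (Suc t))"
    proof (cases "t < t1")
      case True thus ?thesis using c1 t unfolding c_def by auto
    next
      case False
      hence "c t = c2 t" unfolding c_def using c1 c2 by auto
      moreover have "c (Suc t) = c2 (Suc t)" unfolding c_def using False by auto
      ultimately show ?thesis using c2 t False by auto
    qed
  qed
  moreover have "c t0 = x" unfolding c_def using c1 by auto
  moreover have "c t2 = w" unfolding c_def using c1 c2 by auto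
  ultimately show ?thesis unfolding realz_def using c1 c2 by auto
qed

lemma realz_single: "x < y \<Longrightarrow> fits P k M r t x y \<Longrightarrow> realz P k M r t (Suc t) x y"
  unfolding realz_def by (rule conjI, simp, rule exI[of _ "\<lambda>s. if s \<le> t then x else y"], auto simp: less_Suc_eq)

lemma validr_mono: "validr k m r \<Longrightarrow> i \<le> i' \<Longrightarrow> i' \<le> k \<Longrightarrow> r i + (i' - i) \<le> r i'"
proof (induction i')
  case 0 thus ?case by simp
next
  case (Suc i')
  show ?case
  proof (cases "i \<le> i'")
    case True
    hence "r i + (i' - i) \<le> r i'" using Suc by simp
    moreover have "r i' < r (Suc i')" using Suc.prems unfolding validr_def by auto
    ultimately show ?thesis using True by simp
  next
    case False thus ?thesis using Suc.prems by (simp add: le_Suc_eq)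
  qed
qed

lemma c_mono: "(\<forall>t<l. (c::nat\<Rightarrow>nat) t < c (Suc t)) \<Longrightarrow> t \<le> t' \<Longrightarrow> t' \<le> l \<Longrightarrow> c t \<le> c t'"
proof (induction t')
  case 0 thus ?case by simp
next
  case (Suc t')
  show ?case
  proof (cases "t \<le> t'")
    case True
    hence "c t \<le> c t'" using Suc by simp
    moreover have "c t' < c (Suc t')" using Suc.prems by auto
    ultimately show ?thesis by simp
  next
    case False thus ?thesis using Suc.prems by (simp add: le_Suc_eq)
  qed
qed

definition gam :: "bmat \<Rightarrow> nat \<Rightarrow> nat \<Rightarrow> nat" where
  "gam M a x = card {b. b < x \<and> M a b}"

lemma gam_mono: "x \<le> y \<Longrightarrow> gam M a x \<le> gam M a y"
  unfolding gam_def by (rule card_mono) auto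

lemma gam_Suc: "gam M a (Suc x) = (if M a x then Suc (gam M a x) else gam M a x)"
proof -
  have "{b. b < Suc x \<and> M a b} = (if M a x then insert x {b. b < x \<and> M a b} else {b. b < x \<and> M a b})"
    by (auto simp: less_Suc_eq)
  thus ?thesis unfolding gam_def by auto
qed

lemma gam_gap: "gam M a x < gam M a y \<Longrightarrow> \<exists>b. x \<le> b \<and> b < y \<and> M a b"
proof (rule ccontr)
  assume g: "gam M a x < gam M a y" and n: "\<not> (\<exists>b. x \<le> b \<and> b < y \<and> M a b)"
  have "{b. b < y \<and> M a b} \<subseteq> {b. b < x \<and> M a b}" using n by auto
  hence "gam M a y \<le> gam M a x" unfolding gam_def by (rule card_mono[rotated]) auto
  thus False using g by simp
qed

lemma gam_nogap: "x \<le> y \<Longrightarrow> (\<forall>b. x \<le> b \<and> b < y \<longrightarrow> \<not> M a b) \<Longrightarrow> gam M a y = gam M a x"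
  using gam_gap[of M a x y] gam_mono[of x y M a] by fastforce

lemma first_one: "x \<le> (b::nat) \<Longrightarrow> M a b \<Longrightarrow> \<exists>e. x \<le> e \<and> e \<le> b \<and> M a e \<and> (\<forall>b'. x \<le> b' \<and> b' < e \<longrightarrow> \<not> M a b')"
proof -
  assume h: "x \<le> b" "M a b"
  define e where "e = (LEAST e. x \<le> e \<and> M a e)"
  have "x \<le> e \<and> M a e" unfolding e_def by (rule LeastI[of _ b]) (use h in auto)
  moreover have "e \<le> b" unfolding e_def by (rule Least_le) (use h in auto)
  moreover have "\<forall>b'. x \<le> b' \<and> b' < e \<longrightarrow> \<not> M a b'" unfolding e_def using not_less_Least by blast
  ultimately show ?thesis by blast
qed

lemma gam_least: "x \<le> e \<Longrightarrow> M a e \<Longrightarrow> (\<forall>b. x \<le> b \<and> b < e \<longrightarrow> \<not> M a b) \<Longrightarrow> gam M a (Suc e) = Suc (gam M a x)"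
  using gam_nogap[of x e M a] gam_Suc[of M a e] by simp

lemma fits_intro:
  assumes "\<forall>i<k. P i t \<longrightarrow> i = ia \<or> i = io"
    and "P ia t \<Longrightarrow> \<exists>a b. r ia \<le> a \<and> a < r (Suc ia) \<and> x \<le> b \<and> b < x' \<and> M a b"
    and "P io t \<Longrightarrow> \<exists>a b. r io \<le> a \<and> a < r (Suc io) \<and> x \<le> b \<and> b < x' \<and> M a b"
  shows "fits P k M r t x x'"
  unfolding fits_def using assms by blast

lemma fits_set_one: "fits P k (set_one M a z) r t x x' \<Longrightarrow> (z < x \<or> x' \<le> z) \<Longrightarrow> fits P k M r t x x'"
  unfolding fits_def set_one_def by (fastforce split: if_splits)


lemma chain:
  assumes only: "\<forall>i<k. \<forall>t<l. P i t \<longrightarrow> i = ia \<or> i = io"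
    and ar: "r ia \<le> a" "a < r (Suc ia)"
  shows "gam M a x + Suc K \<le> gam M a y' \<Longrightarrow> y' \<le> y \<Longrightarrow> Suc (t + K) \<le> l \<Longrightarrow>
    (\<forall>t'. t \<le> t' \<and> t' < t + K \<longrightarrow> \<not> P io t') \<Longrightarrow>
    (\<forall>u. gam M a u < gam M a y' \<longrightarrow> fits P k M r (t + K) u y) \<Longrightarrow>
    realz P k M r t (Suc (t + K)) x y"
proof (induction K arbitrary: t x)
  case 0
  have gg: "gam M a x < gam M a y'" using "0.prems"(1) by linarith
  obtain b where bb: "x \<le> b" "b < y'" "M a b" using gam_gap[OF gg] by blast
  have xy: "x < y" using bb "0.prems"(2) by linarith
  have "fits P k M r (t + 0) x y" using "0.prems"(5) gg by blast
  hence "fits P k M r t x y" by simp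
  with xy show ?case by (simp add: realz_single)
next
  case (Suc K)
  have gg: "gam M a x < gam M a y'" using Suc.prems(1) by linarith
  obtain b where b: "x \<le> b" "b < y'" "M a b" using gam_gap[OF gg] by blast
  obtain e where e: "x \<le> e" "e \<le> b" "M a e" "\<forall>b'. x \<le> b' \<and> b' < e \<longrightarrow> \<not> M a b'"
    using first_one[of x b M a] b by blast
  have ge: "gam M a (Suc e) = Suc (gam M a x)" using gam_least[of x e M a] e by blast
  have tl: "t < l" using Suc.prems(3) by linarith
  have nio: "\<not> P io t" using Suc.prems(4) by simp
  have f: "fits P k M r t x (Suc e)"
  proof (rule fits_intro[where ia=ia and io=io])
    show "\<forall>i<k. P i t \<longrightarrow> i = ia \<or> i = io" using only tl by blast
    show "\<exists>a b. r ia \<le> a \<and> a < r (Suc ia) \<and> x \<le> b \<and> b < Suc e \<and> M a b"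
      using ar e by blast
    show "P io t \<Longrightarrow> \<exists>a b. r io \<le> a \<and> a < r (Suc io) \<and> x \<le> b \<and> b < Suc e \<and> M a b"
      using nio by blast
  qed
  have r1: "realz P k M r t (Suc t) x (Suc e)" using f e(1) by (simp add: realz_single)
  have p1: "gam M a (Suc e) + Suc K \<le> gam M a y'" using Suc.prems(1) ge by simp
  have p3: "Suc (Suc t + K) \<le> l" using Suc.prems(3) by simp
  have p4: "\<forall>t'. Suc t \<le> t' \<and> t' < Suc t + K \<longrightarrow> \<not> P io t'" using Suc.prems(4) by simp
  have p5: "\<forall>u. gam M a u < gam M a y' \<longrightarrow> fits P k M r (Suc t + K) u y" using Suc.prems(5) by simp
  have r2: "realz P k M r (Suc t) (Suc (Suc t + K)) (Suc e) y"
    by (rule Suc.IH[OF p1 Suc.prems(2) p3 p4 p5])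
  show ?case using realz_concat[OF r1 r2] by simp
qed

lemma two_vals:
  assumes "finite S" "Suc (Suc 0) \<le> card (f ` S)"
  shows "\<exists>b1\<in>S. \<exists>b2\<in>S. (f b1 :: nat) < f b2"
proof (rule ccontr)
  assume n: "\<not> ?thesis"
  have "S \<noteq> {}" using assms(2) by (cases "S = {}") auto
  then obtain b where b: "b \<in> S" by blast
  have "\<forall>b'\<in>S. f b' = f b" using n b by (meson linorder_neq_iff)
  hence "f ` S \<subseteq> {f b}" by blast
  hence "card (f ` S) \<le> card {f b}" by (intro card_mono) auto
  thus False using assms(2) by simp
qed

lemma lemA_ind:
  assumes only: "\<forall>i<k. \<forall>t<l. P i t \<longrightarrow> i = ia \<or> i = io"
    and ar: "r ia \<le> a" "a < r (Suc ia)"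
    and Zc: "\<forall>b\<in>Zc. b < n \<and> (\<exists>a'. r io \<le> a' \<and> a' < r (Suc io) \<and> M a' b)"
  shows "Suc (Suc K) \<le> card (gam M a ` {b\<in>Zc. x \<le> b}) \<Longrightarrow> Suc (t + K) \<le> l \<Longrightarrow>
    realz P k M r t (Suc (t + K)) x n"
proof (induction K arbitrary: t x)
  case 0
  have fin: "finite {b\<in>Zc. x \<le> b}" by (rule finite_subset[of _ "{..<n}"]) (use Zc in auto)
  have c2: "Suc (Suc 0) \<le> card (gam M a ` {b\<in>Zc. x \<le> b})" using "0.prems"(1) by simp
  obtain b1 b2 where b: "b1 \<in> {b\<in>Zc. x \<le> b}" "b2 \<in> {b\<in>Zc. x \<le> b}" "gam M a b1 < gam M a b2"
    using two_vals[OF fin c2] by blast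
  obtain e where e: "b1 \<le> e" "e < b2" "M a e" using gam_gap[OF b(3)] by blast
  have z1: "b1 < n \<and> (\<exists>a'. r io \<le> a' \<and> a' < r (Suc io) \<and> M a' b1)" using Zc b(1) by blast
  obtain a' where a': "r io \<le> a'" "a' < r (Suc io)" "M a' b1" using z1 by blast
  have tl: "t < l" using "0.prems"(2) by simp
  have n: "b2 < n" using Zc b(2) by blast
  have xb1: "x \<le> b1" using b(1) by blast
  have f: "fits P k M r t x n"
  proof (rule fits_intro[where ia=ia and io=io])
    show "\<forall>i<k. P i t \<longrightarrow> i = ia \<or> i = io" using only tl by blast
    have "x \<le> e \<and> e < n" using xb1 e n by linarith
    thus "\<exists>a b. r ia \<le> a \<and> a < r (Suc ia) \<and> x \<le> b \<and> b < n \<and> M a b"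
      using ar e(3) by blast
    have "x \<le> b1 \<and> b1 < n" using xb1 z1 by blast
    thus "\<exists>a b. r io \<le> a \<and> a < r (Suc io) \<and> x \<le> b \<and> b < n \<and> M a b"
      using a' by blast
  qed
  have "x < n" using xb1 z1 by linarith
  thus ?case using f by (simp add: realz_single)
next
  case (Suc K)
  let ?S = "{b\<in>Zc. x \<le> b}"
  have fin: "finite ?S" by (rule finite_subset[of _ "{..<n}"]) (use Zc in auto)
  have c2: "Suc (Suc 0) \<le> card (gam M a ` ?S)" using Suc.prems(1) by simp
  obtain bx bz where bxy: "bx \<in> ?S" "bz \<in> ?S" "gam M a bx < gam M a bz"
    using two_vals[OF fin c2] by blast
  define b0 where "b0 = (LEAST b. b \<in> Zc \<and> x \<le> b)"
  have b0: "b0 \<in> ?S" unfolding b0_def using LeastI[of "\<lambda>b. b \<in> Zc \<and> x \<le> b" bx] bxy(1) by simp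
  have b0le: "\<And>b. b \<in> ?S \<Longrightarrow> b0 \<le> b" unfolding b0_def using Least_le[of "\<lambda>b. b \<in> Zc \<and> x \<le> b"] by simp
  obtain b2 where b2: "b2 \<in> ?S" "gam M a b2 \<noteq> gam M a b0"
  proof (cases "gam M a bx = gam M a b0")
    case True thus ?thesis using that bxy by simp
  next
    case False thus ?thesis using that bxy by blast
  qed
  have gg: "gam M a b0 < gam M a b2" using b2 b0le[OF b2(1)] gam_mono[of b0 b2 M a] by simp
  obtain bb where bb: "b0 \<le> bb" "bb < b2" "M a bb" using gam_gap[OF gg] by blast
  obtain e where e: "b0 \<le> e" "e \<le> bb" "M a e" "\<forall>b'. b0 \<le> b' \<and> b' < e \<longrightarrow> \<not> M a b'"
    using first_one[of b0 bb M a] bb by blast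
  have z0: "b0 < n \<and> (\<exists>a'. r io \<le> a' \<and> a' < r (Suc io) \<and> M a' b0)" using Zc b0 by blast
  obtain a' where a': "r io \<le> a'" "a' < r (Suc io)" "M a' b0" using z0 by blast
  have tl: "t < l" using Suc.prems(2) by simp
  have xb0: "x \<le> b0" using b0 by blast
  have f: "fits P k M r t x (Suc e)"
  proof (rule fits_intro[where ia=ia and io=io])
    show "\<forall>i<k. P i t \<longrightarrow> i = ia \<or> i = io" using only tl by blast
    have "x \<le> e \<and> e < Suc e" using xb0 e by linarith
    thus "\<exists>a b. r ia \<le> a \<and> a < r (Suc ia) \<and> x \<le> b \<and> b < Suc e \<and> M a b"
      using ar e(3) by blast
    have "x \<le> b0 \<and> b0 < Suc e" using xb0 e by linarith
    thus "\<exists>a b. r io \<le> a \<and> a < r (Suc io) \<and> x \<le> b \<and> b < Suc e \<and> M a b"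
      using a' by blast
  qed
  have "x < Suc e" using xb0 e by linarith
  hence r1: "realz P k M r t (Suc t) x (Suc e)" using f by (simp add: realz_single)
  have sub: "gam M a ` ?S - {gam M a b0} \<subseteq> gam M a ` {b\<in>Zc. Suc e \<le> b}"
  proof
    fix g assume "g \<in> gam M a ` ?S - {gam M a b0}"
    then obtain b where b: "b \<in> ?S" "gam M a b \<noteq> gam M a b0" "g = gam M a b" by blast
    have gg2: "gam M a b0 < gam M a b" using b b0le[OF b(1)] gam_mono[of b0 b M a] by simp
    obtain cc where cc: "b0 \<le> cc" "cc < b" "M a cc" using gam_gap[OF gg2] by blast
    have "\<not> cc < e" using e(4) cc by blast
    hence "Suc e \<le> b" using cc(2) by linarith
    thus "g \<in> gam M a ` {b\<in>Zc. Suc e \<le> b}" using b by blast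
  qed
  have fin2: "finite (gam M a ` {b\<in>Zc. Suc e \<le> b})" 
    by (rule finite_imageI, rule finite_subset[of _ "{..<n}"]) (use Zc in auto)
  have "card (gam M a ` ?S - {gam M a b0}) \<le> card (gam M a ` {b\<in>Zc. Suc e \<le> b})"
    using card_mono[OF fin2 sub] .
  moreover have "card (gam M a ` ?S - {gam M a b0}) = card (gam M a ` ?S) - 1"
    using b0 by (simp add: card_Diff_singleton_if)
  ultimately have cc: "Suc (Suc K) \<le> card (gam M a ` {b\<in>Zc. Suc e \<le> b})" using Suc.prems(1) by simp
  have q3: "Suc (Suc t + K) \<le> l" using Suc.prems(2) by simp
  have r2: "realz P k M r (Suc t) (Suc (Suc t + K)) (Suc e) n"
    by (rule Suc.IH[OF cc q3])
  show ?case using realz_concat[OF r1 r2] by simp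
qed

lemma lemA:
  assumes only: "\<forall>i<k. \<forall>t<l. P i t \<longrightarrow> i = ia \<or> i = io"
    and ar: "r ia \<le> a" "a < r (Suc ia)" and v: "validr k m r"
    and nc: "\<not> contains P k l M m n" and l: "0 < l"
  shows "card (gam M a ` {b. b < n \<and> (\<exists>a'. r io \<le> a' \<and> a' < r (Suc io) \<and> M a' b)}) \<le> l"
proof (rule ccontr)
  let ?Z = "{b. b < n \<and> (\<exists>a'. r io \<le> a' \<and> a' < r (Suc io) \<and> M a' b)}"
  assume "\<not> ?thesis"
  hence "Suc (Suc (l - 1)) \<le> card (gam M a ` {b\<in>?Z. 0 \<le> b})" using l by simp
  moreover have "Suc (0 + (l - 1)) \<le> l" using l by simp
  moreover have "\<forall>b\<in>?Z. b < n \<and> (\<exists>a'. r io \<le> a' \<and> a' < r (Suc io) \<and> M a' b)" by blast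
  ultimately have "realz P k M r 0 (Suc (0 + (l - 1))) 0 n"
    using lemA_ind[OF only ar, of ?Z] by blast
  hence "realz P k M r 0 l 0 n" using l by simp
  hence "contains P k l M m n" using v contains_iff by blast
  thus False using nc by simp
qed


lemma disj_blocks: "validr k m r \<Longrightarrow> i < k \<Longrightarrow> i' < k \<Longrightarrow> i \<noteq> i' \<Longrightarrow>
   r i \<le> a \<Longrightarrow> a < r (Suc i) \<Longrightarrow> r i' \<le> a \<Longrightarrow> a < r (Suc i') \<Longrightarrow> False"
proof -
  assume v: "validr k m r" and h: "i < k" "i' < k" "i \<noteq> i'" "r i \<le> a" "a < r (Suc i)" "r i' \<le> a" "a < r (Suc i')"
  show False
  proof (cases "i < i'")
    case True
    have "r (Suc i) + (i' - Suc i) \<le> r i'" using validr_mono[OF v, of "Suc i" i'] True h by simp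
    thus False using h by simp
  next
    case False
    hence "i' < i" using h by simp
    have "r (Suc i') + (i - Suc i') \<le> r i" using validr_mono[OF v, of "Suc i'" i] \<open>i' < i\<close> h by simp
    thus False using h by simp
  qed
qed

lemma lemB:
  assumes only: "\<forall>i<k. \<forall>t<l. P i t \<longrightarrow> i = ia \<or> i = io"
    and dif: "ia \<noteq> io" "ia < k" "io < k"
    and vr: "validr k m r"
    and c0: "c 0 = 0" "c l = n" and cs: "\<forall>t<l. c t < c (Suc t)"
    and cf: "\<forall>t<l. fits P k (set_one M a z) r t (c t) (c (Suc t))"
    and j: "j < l" and ar: "r ia \<le> a" "a < r (Suc ia)" and zc: "c j \<le> z" "z < c (Suc j)"
    and empty: "\<forall>a' b'. r ia \<le> a' \<and> a' < r (Suc ia) \<and> c j \<le> b' \<and> b' < c (Suc j) \<longrightarrow> \<not> M a' b'"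
    and nc: "\<not> contains P k l M m n"
  shows "gam M a z \<le> l \<or> (\<exists>w a'. r io \<le> a' \<and> a' < r (Suc io) \<and> M a' w \<and> w < z \<and> gam M a z \<le> gam M a w + l)"
proof -
  have cm: "\<And>t t'. t \<le> t' \<Longrightarrow> t' \<le> l \<Longrightarrow> c t \<le> c t'" using c_mono[OF cs] by blast
  have gz: "gam M a z = gam M a (c j)"
    by (rule gam_nogap) (use zc empty ar in auto)
  have rz: "realz P k M r 0 0 0 (c 0)" using c0 unfolding realz_def by auto
  have suf: "realz P k M r (Suc j) l (c (Suc j)) n"
    unfolding realz_def
  proof (intro conjI exI[of _ c])
    show "Suc j \<le> l" using j by simp
    show "c (Suc j) = c (Suc j)" by simp
    show "c l = n" using c0 by simp
    show "\<forall>t. Suc j \<le> t \<and> t < l \<longrightarrow> c t < c (Suc t) \<and> fits P k M r t (c t) (c (Suc t))"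
    proof (intro allI impI conjI)
      fix t assume t: "Suc j \<le> t \<and> t < l"
      show "c t < c (Suc t)" using cs t by simp
      have "c (Suc j) \<le> c t" using cm t by simp
      hence "z < c t" using zc by simp
      thus "fits P k M r t (c t) (c (Suc t))" using fits_set_one cf t by blast
    qed
  qed
  have pre: "\<And>i0. i0 \<le> j \<Longrightarrow> realz P k M r 0 i0 0 (c i0)"
    unfolding realz_def
  proof -
    fix i0 assume i0: "i0 \<le> j"
    show "0 \<le> i0 \<and> (\<exists>c'. c' 0 = 0 \<and> c' i0 = c i0 \<and> (\<forall>t. 0 \<le> t \<and> t < i0 \<longrightarrow> c' t < c' (Suc t) \<and> fits P k M r t (c' t) (c' (Suc t))))"
    proof (intro conjI exI[of _ c])
      show "0 \<le> i0" by simp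
      show "c 0 = 0" using c0 by simp
      show "c i0 = c i0" by simp
      show "\<forall>t. 0 \<le> t \<and> t < i0 \<longrightarrow> c t < c (Suc t) \<and> fits P k M r t (c t) (c (Suc t))"
      proof (intro allI impI conjI)
        fix t assume t: "0 \<le> t \<and> t < i0"
        show "c t < c (Suc t)" using cs t i0 j by simp
        have "c (Suc t) \<le> c j" using cm t i0 j by simp
        hence "c (Suc t) \<le> z" using zc by simp
        moreover have "fits P k (set_one M a z) r t (c t) (c (Suc t))" using cf t i0 j by simp
        ultimately show "fits P k M r t (c t) (c (Suc t))" using fits_set_one by blast
      qed
    qed
  qed
  have F: "\<forall>u. gam M a u < gam M a (c j) \<longrightarrow> fits P k M r j u (c (Suc j))"
  proof (intro allI impI)
    fix u assume u: "gam M a u < gam M a (c j)"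
    obtain b where b: "u \<le> b" "b < c j" "M a b" using gam_gap[OF u] by blast
    show "fits P k M r j u (c (Suc j))"
    proof (rule fits_intro[where ia=ia and io=io])
      show "\<forall>i<k. P i j \<longrightarrow> i = ia \<or> i = io" using only j by blast
      have "u \<le> b \<and> b < c (Suc j)" using b zc by simp
      thus "\<exists>a b. r ia \<le> a \<and> a < r (Suc ia) \<and> u \<le> b \<and> b < c (Suc j) \<and> M a b"
        using ar b(3) by blast
      assume pio: "P io j"
      have "fits P k (set_one M a z) r j (c j) (c (Suc j))" using cf j by simp
      then obtain a2 b2 where w: "r io \<le> a2" "a2 < r (Suc io)" "c j \<le> b2" "b2 < c (Suc j)"
          "set_one M a z a2 b2"
        unfolding fits_def using pio dif by blast
      have "a2 \<noteq> a" using disj_blocks[OF vr dif(2) dif(3) dif(1)] ar w(1,2) by blast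
      hence "M a2 b2" using w(5) unfolding set_one_def by simp
      moreover have "u \<le> b2" using b w by simp
      ultimately show "\<exists>a b. r io \<le> a \<and> a < r (Suc io) \<and> u \<le> b \<and> b < c (Suc j) \<and> M a b"
        using w by blast
    qed
  qed
  have contra: "realz P k M r 0 l 0 n \<Longrightarrow> False" using contains_iff vr nc by blast
  show ?thesis
  proof (cases "\<exists>i0<j. P io i0")
    case False
    have "gam M a z \<le> l"
    proof (rule ccontr)
      assume "\<not> gam M a z \<le> l"
      hence g: "gam M a 0 + Suc j \<le> gam M a (c j)" using gz j unfolding gam_def by simp
      have "realz P k M r 0 (Suc (0 + j)) 0 (c (Suc j))"
      proof (rule chain[OF only ar g])
        show "c j \<le> c (Suc j)" using cs j by (simp add: less_imp_le)
        show "Suc (0 + j) \<le> l" using j by simp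
        show "\<forall>t'. 0 \<le> t' \<and> t' < 0 + j \<longrightarrow> \<not> P io t'" using False by simp
        show "\<forall>u. gam M a u < gam M a (c j) \<longrightarrow> fits P k M r (0 + j) u (c (Suc j))" using F by simp
      qed
      hence "realz P k M r 0 l 0 n" using realz_concat suf by simp
      thus False using contra by simp
    qed
    thus ?thesis by simp
  next
    case True
    define i0 where "i0 = Max {i. i < j \<and> P io i}"
    have fin: "finite {i. i < j \<and> P io i}" by simp
    have i0: "i0 < j" "P io i0" using Max_in[OF fin] True unfolding i0_def by auto
    have i0max: "\<And>t. t < j \<Longrightarrow> P io t \<Longrightarrow> t \<le> i0" unfolding i0_def using Max_ge[OF fin] by simp
    have "fits P k (set_one M a z) r i0 (c i0) (c (Suc i0))" using cf i0 j by simp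
    then obtain a' w where w: "r io \<le> a'" "a' < r (Suc io)" "c i0 \<le> w" "w < c (Suc i0)"
        "set_one M a z a' w"
      unfolding fits_def using i0 dif by blast
    have "a' \<noteq> a" using disj_blocks[OF vr dif(2) dif(3) dif(1)] ar w(1,2) by blast
    hence Mw: "M a' w" using w(5) unfolding set_one_def by simp
    have wj: "w < c j" using w(4) cm[of "Suc i0" j] i0 j by simp
    have "gam M a z \<le> gam M a w + l"
    proof (rule ccontr)
      assume "\<not> gam M a z \<le> gam M a w + l"
      hence gl: "gam M a w + l < gam M a (c j)" using gz by simp
      hence gg: "gam M a w < gam M a (c j)" by simp
      obtain bb where bb: "w \<le> bb" "bb < c j" "M a bb" using gam_gap[OF gg] by blast
      obtain e where e: "w \<le> e" "e \<le> bb" "M a e" "\<forall>b'. w \<le> b' \<and> b' < e \<longrightarrow> \<not> M a b'"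
        using first_one[of w bb M a] bb by blast
      have ge: "gam M a (Suc e) = Suc (gam M a w)" using gam_least[of w e M a] e by blast
      have g: "gam M a (Suc e) + Suc (j - Suc i0) \<le> gam M a (c j)" using ge gl i0 j by simp
      have r3: "realz P k M r (Suc i0) (Suc (Suc i0 + (j - Suc i0))) (Suc e) (c (Suc j))"
      proof (rule chain[OF only ar g])
        show "c j \<le> c (Suc j)" using cs j by (simp add: less_imp_le)
        show "Suc (Suc i0 + (j - Suc i0)) \<le> l" using j i0 by simp
        show "\<forall>t'. Suc i0 \<le> t' \<and> t' < Suc i0 + (j - Suc i0) \<longrightarrow> \<not> P io t'"
        proof (intro allI impI)
          fix t' assume t': "Suc i0 \<le> t' \<and> t' < Suc i0 + (j - Suc i0)"
          hence "t' < j" using i0 by simp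
          thus "\<not> P io t'" using i0max[of t'] t' by fastforce
        qed
        show "\<forall>u. gam M a u < gam M a (c j) \<longrightarrow> fits P k M r (Suc i0 + (j - Suc i0)) u (c (Suc j))"
          using F i0 by simp
      qed
      have "Suc (Suc i0 + (j - Suc i0)) = Suc j" using i0 by simp
      hence r3': "realz P k M r (Suc i0) (Suc j) (Suc e) (c (Suc j))" using r3 by simp
      have fi0: "fits P k M r i0 (c i0) (Suc e)"
      proof (rule fits_intro[where ia=ia and io=io])
        have "i0 < l" using i0 j by simp
        thus "\<forall>i<k. P i i0 \<longrightarrow> i = ia \<or> i = io" using only by blast
        have "c i0 \<le> e \<and> e < Suc e" using w e by simp
        thus "\<exists>a b. r ia \<le> a \<and> a < r (Suc ia) \<and> c i0 \<le> b \<and> b < Suc e \<and> M a b"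
          using ar e(3) by blast
        have "c i0 \<le> w \<and> w < Suc e" using w e by simp
        thus "\<exists>a b. r io \<le> a \<and> a < r (Suc io) \<and> c i0 \<le> b \<and> b < Suc e \<and> M a b"
          using w(1,2) Mw by blast
      qed
      have "c i0 < Suc e" using w e by simp
      hence r2: "realz P k M r i0 (Suc i0) (c i0) (Suc e)" using fi0 by (simp add: realz_single)
      have r1: "realz P k M r 0 i0 0 (c i0)" using pre i0 by simp
      have "realz P k M r 0 l 0 n"
        using realz_concat[OF realz_concat[OF realz_concat[OF r1 r2] r3'] suf] .
      thus False using contra by simp
    qed
    moreover have "w < z" using wj zc by simp
    ultimately show ?thesis using w(1,2) Mw by blast
  qed
qed


definition rc :: "nat \<Rightarrow> nat \<Rightarrow> nat \<Rightarrow> nat \<Rightarrow> nat \<Rightarrow> nat \<Rightarrow> nat" where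
  "rc m k i1 i2 B i = (if i \<le> i1 then i else if i \<le> i2 then B + i else m + i - k)"

lemma rc_valid:
  assumes "i1 < i2" "i2 < k" "B + k \<le> m"
  shows "validr k m (rc m k i1 i2 B)"
  unfolding validr_def
proof (intro conjI allI impI)
  show "rc m k i1 i2 B 0 = 0" unfolding rc_def by simp
  show "rc m k i1 i2 B k = m" unfolding rc_def using assms by simp
  fix i assume i: "i < k"
  show "rc m k i1 i2 B i < rc m k i1 i2 B (Suc i)"
    unfolding rc_def using assms i by auto
qed

lemma type1:
  assumes v: "validr k m r" and o: "i1 < i2" "i2 < k" and ar: "r i1 \<le> a" "a < r (Suc i1)"
  shows "validr k m (rc m k i1 i2 (a - i1)) \<and> rc m k i1 i2 (a - i1) i1 \<le> a \<and> a < rc m k i1 i2 (a - i1) (Suc i1)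
     \<and> (\<forall>a'. r i2 \<le> a' \<and> a' < r (Suc i2) \<longrightarrow> rc m k i1 i2 (a - i1) i2 \<le> a' \<and> a' < rc m k i1 i2 (a - i1) (Suc i2))"
proof -
  have f1: "r 0 + (i1 - 0) \<le> r i1" using validr_mono[OF v, of 0 i1] o by simp
  have f2: "r (Suc i1) + (i2 - Suc i1) \<le> r i2" using validr_mono[OF v, of "Suc i1" i2] o by simp
  have f3: "r (Suc i2) + (k - Suc i2) \<le> r k" using validr_mono[OF v, of "Suc i2" k] o by simp
  have f4: "r i2 < r (Suc i2)" using v o unfolding validr_def by simp
  have r0: "r 0 = 0" "r k = m" using v unfolding validr_def by auto
  have "a - i1 + k \<le> m" using f1 f2 f3 f4 r0 ar o by linarith
  hence "validr k m (rc m k i1 i2 (a - i1))" using rc_valid o by blast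
  moreover have "rc m k i1 i2 (a - i1) i1 \<le> a" unfolding rc_def using f1 r0 ar by simp
  moreover have "a < rc m k i1 i2 (a - i1) (Suc i1)" unfolding rc_def using f1 r0 ar o by simp
  moreover have "\<forall>a'. r i2 \<le> a' \<and> a' < r (Suc i2) \<longrightarrow> rc m k i1 i2 (a - i1) i2 \<le> a' \<and> a' < rc m k i1 i2 (a - i1) (Suc i2)"
    unfolding rc_def using f1 f2 f3 f4 r0 ar o by auto
  ultimately show ?thesis by blast
qed

lemma type2:
  assumes v: "validr k m r" and o: "i1 < i2" "i2 < k" and ar: "r i2 \<le> a" "a < r (Suc i2)"
  shows "validr k m (rc m k i1 i2 (a - i2)) \<and> rc m k i1 i2 (a - i2) i2 \<le> a \<and> a < rc m k i1 i2 (a - i2) (Suc i2)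
     \<and> (\<forall>a'. r i1 \<le> a' \<and> a' < r (Suc i1) \<longrightarrow> rc m k i1 i2 (a - i2) i1 \<le> a' \<and> a' < rc m k i1 i2 (a - i2) (Suc i1))"
proof -
  have f1: "r 0 + (i1 - 0) \<le> r i1" using validr_mono[OF v, of 0 i1] o by simp
  have f0: "r 0 + (i2 - 0) \<le> r i2" using validr_mono[OF v, of 0 i2] o by simp
  have f2: "r (Suc i1) + (i2 - Suc i1) \<le> r i2" using validr_mono[OF v, of "Suc i1" i2] o by simp
  have f3: "r (Suc i2) + (k - Suc i2) \<le> r k" using validr_mono[OF v, of "Suc i2" k] o by simp
  have r0: "r 0 = 0" "r k = m" using v unfolding validr_def by auto
  have "a - i2 + k \<le> m" using f0 f3 r0 ar o by linarith
  hence "validr k m (rc m k i1 i2 (a - i2))" using rc_valid o by blast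
  moreover have "rc m k i1 i2 (a - i2) i2 \<le> a" unfolding rc_def using f0 r0 ar o by simp
  moreover have "a < rc m k i1 i2 (a - i2) (Suc i2)" unfolding rc_def using f0 f3 r0 ar o by simp
  moreover have "\<forall>a'. r i1 \<le> a' \<and> a' < r (Suc i1) \<longrightarrow> rc m k i1 i2 (a - i2) i1 \<le> a' \<and> a' < rc m k i1 i2 (a - i2) (Suc i1)"
    unfolding rc_def using f0 f1 f2 r0 ar o by auto
  ultimately show ?thesis by blast
qed


lemma gam_strict: "b < b' \<Longrightarrow> M a (b' - 1) \<Longrightarrow> 0 < b' \<Longrightarrow> gam M a b < gam M a b'"
proof -
  assume h: "b < b'" "M a (b' - 1)" "0 < b'"
  have "gam M a b \<le> gam M a (b' - 1)" using gam_mono h(1) by simp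
  moreover have "gam M a (Suc (b' - 1)) = Suc (gam M a (b' - 1))" using gam_Suc h(2) by simp
  moreover have "Suc (b' - 1) = b'" using h(3) by simp
  ultimately show ?thesis by simp
qed

lemma row_bound:
  assumes only: "\<forall>i<k. \<forall>t<l. P i t \<longrightarrow> i = i1 \<or> i = i2" and o: "i1 < i2" "i2 < k" and l: "0 < l"
    and crit: "critical P k l M m n" and am: "a < m"
  shows "row_complexity M n a \<le> Suc l + 2 * (l * Suc l)"
proof -
  have nc: "\<not> contains P k l M m n" using crit unfolding critical_def avoids_def by blast
  have only2: "\<forall>i<k. \<forall>t<l. P i t \<longrightarrow> i = i2 \<or> i = i1" using only by blast
  define g where "g = gam M a"
  define E1 where "E1 = (\<exists>r. validr k m r \<and> r i1 \<le> a \<and> a < r (Suc i1))"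
  define E2 where "E2 = (\<exists>r. validr k m r \<and> r i2 \<le> a \<and> a < r (Suc i2))"
  define R1 where "R1 = rc m k i1 i2 (a - i1)"
  define R2 where "R2 = rc m k i1 i2 (a - i2)"
  define Z1 where "Z1 = {b. b < n \<and> (\<exists>a'. R1 i2 \<le> a' \<and> a' < R1 (Suc i2) \<and> M a' b)}"
  define Z2 where "Z2 = {b. b < n \<and> (\<exists>a'. R2 i1 \<le> a' \<and> a' < R2 (Suc i1) \<and> M a' b)}"
  define G1 where "G1 = (if E1 then g ` Z1 else {})"
  define G2 where "G2 = (if E2 then g ` Z2 else {})"
  have cG1: "card G1 \<le> l"
  proof (cases E1)
    case True
    then obtain r where r: "validr k m r" "r i1 \<le> a" "a < r (Suc i1)" unfolding E1_def by blast
    have t1: "validr k m R1" "R1 i1 \<le> a" "a < R1 (Suc i1)" using type1[OF r(1) o r(2,3)] unfolding R1_def by auto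
    have "card (gam M a ` Z1) \<le> l" unfolding Z1_def
      by (rule lemA[OF only t1(2,3) t1(1) nc l])
    thus ?thesis using True unfolding G1_def g_def by simp
  next
    case False thus ?thesis unfolding G1_def by simp
  qed
  have cG2: "card G2 \<le> l"
  proof (cases E2)
    case True
    then obtain r where r: "validr k m r" "r i2 \<le> a" "a < r (Suc i2)" unfolding E2_def by blast
    have t2: "validr k m R2" "R2 i2 \<le> a" "a < R2 (Suc i2)" using type2[OF r(1) o r(2,3)] unfolding R2_def by auto
    have "card (gam M a ` Z2) \<le> l" unfolding Z2_def
      by (rule lemA[OF only2 t2(2,3) t2(1) nc l])
    thus ?thesis using True unfolding G2_def g_def by simp
  next
    case False thus ?thesis unfolding G2_def by simp
  qed
  have "finite Z1" unfolding Z1_def by (rule finite_subset[of _ "{..<n}"]) auto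
  hence fG1: "finite G1" unfolding G1_def by simp
  have "finite Z2" unfolding Z2_def by (rule finite_subset[of _ "{..<n}"]) auto
  hence fG2: "finite G2" unfolding G2_def by simp
  define T1 where "T1 = (\<Union>x\<in>G1. {x..x+l})"
  define T2 where "T2 = (\<Union>x\<in>G2. {x..x+l})"
  have key: "\<And>z. z < n \<Longrightarrow> \<not> M a z \<Longrightarrow> g z \<in> {..l} \<union> T1 \<union> T2"
  proof -
    fix z assume zn: "z < n" and zm: "\<not> M a z"
    have cr: "\<forall>a<m. \<forall>b<n. \<not> M a b \<longrightarrow> contains P k l (set_one M a b) m n"
      using crit unfolding critical_def by (rule conjunct2)
    have "contains P k l (set_one M a z) m n" using cr am zn zm by simp
    then obtain r c where rc: "r 0 = 0 \<and> r k = m \<and> (\<forall>i<k. r i < r (Suc i)) \<and>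
        c 0 = 0 \<and> c l = n \<and> (\<forall>j<l. c j < c (Suc j)) \<and>
        (\<forall>i<k. \<forall>j<l. P i j \<longrightarrow>
           (\<exists>a' b. r i \<le> a' \<and> a' < r (Suc i) \<and> c j \<le> b \<and> b < c (Suc j) \<and> set_one M a z a' b))"
      unfolding contains_def by blast
    have vr: "validr k m r" using rc unfolding validr_def by blast
    have c0: "c 0 = 0" "c l = n" and cs: "\<forall>t<l. c t < c (Suc t)" using rc by auto
    have cf: "\<forall>t<l. fits P k (set_one M a z) r t (c t) (c (Suc t))" using rc unfolding fits_def by blast
    have "\<exists>i<k. \<exists>j<l. P i j \<and> \<not> (\<exists>a' b. r i \<le> a' \<and> a' < r (Suc i) \<and> c j \<le> b \<and> b < c (Suc j) \<and> M a' b)"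
    proof (rule ccontr)
      assume "\<not> ?thesis"
      hence h: "\<forall>i<k. \<forall>j<l. P i j \<longrightarrow> (\<exists>a' b. r i \<le> a' \<and> a' < r (Suc i) \<and> c j \<le> b \<and> b < c (Suc j) \<and> M a' b)" by blast
      have "contains P k l M m n" unfolding contains_def
        apply (rule exI[of _ r], rule exI[of _ c])
        using rc h by blast
      thus False using nc by simp
    qed
    then obtain i j where ij: "i < k" "j < l" "P i j"
      and emp: "\<not> (\<exists>a' b. r i \<le> a' \<and> a' < r (Suc i) \<and> c j \<le> b \<and> b < c (Suc j) \<and> M a' b)" by blast
    obtain a' b where w: "r i \<le> a'" "a' < r (Suc i)" "c j \<le> b" "b < c (Suc j)" "set_one M a z a' b"
      using rc ij by blast
    have "\<not> M a' b" using emp w by blast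
    hence ab: "a' = a" "b = z" using w(5) unfolding set_one_def by (auto split: if_splits)
    have empty: "\<forall>a' b'. r i \<le> a' \<and> a' < r (Suc i) \<and> c j \<le> b' \<and> b' < c (Suc j) \<longrightarrow> \<not> M a' b'"
      using emp by blast
    have ar: "r i \<le> a" "a < r (Suc i)" using w ab by auto
    have zc: "c j \<le> z" "z < c (Suc j)" using w ab by auto
    have "i = i1 \<or> i = i2" using only ij by blast
    thus "g z \<in> {..l} \<union> T1 \<union> T2"
    proof
      assume ii: "i = i1"
      have dif: "i1 \<noteq> i2" "i1 < k" "i2 < k" using o by auto
      have E: E1 unfolding E1_def using vr ar ii by blast
      have t1: "\<forall>a'. r i2 \<le> a' \<and> a' < r (Suc i2) \<longrightarrow> R1 i2 \<le> a' \<and> a' < R1 (Suc i2)"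
        using type1[OF vr o ar[unfolded ii]] unfolding R1_def by blast
      have "gam M a z \<le> l \<or> (\<exists>w a'. r i2 \<le> a' \<and> a' < r (Suc i2) \<and> M a' w \<and> w < z \<and> gam M a z \<le> gam M a w + l)"
        using lemB[OF only dif vr c0 cs cf ij(2) ar[unfolded ii] zc empty[unfolded ii] nc] .
      thus ?thesis
      proof
        assume "gam M a z \<le> l" thus ?thesis unfolding g_def by simp
      next
        assume "\<exists>w a'. r i2 \<le> a' \<and> a' < r (Suc i2) \<and> M a' w \<and> w < z \<and> gam M a z \<le> gam M a w + l"
        then obtain w a2 where ww: "r i2 \<le> a2" "a2 < r (Suc i2)" "M a2 w" "w < z" "gam M a z \<le> gam M a w + l" by blast
        have rr: "R1 i2 \<le> a2 \<and> a2 < R1 (Suc i2)" using t1 ww(1,2) by blast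
        have "w < n" using ww(4) zn by simp
        hence "w \<in> Z1" unfolding Z1_def using rr ww(3) by blast
        hence "g w \<in> G1" unfolding G1_def using E by simp
        moreover have "g w \<le> g z" unfolding g_def using gam_mono ww(4) by simp
        moreover have "g z \<le> g w + l" using ww(5) unfolding g_def .
        ultimately have "g z \<in> T1" unfolding T1_def by (intro UN_I[of "g w"]) auto
        thus ?thesis by simp
      qed
    next
      assume ii: "i = i2"
      have dif: "i2 \<noteq> i1" "i2 < k" "i1 < k" using o by auto
      have E: E2 unfolding E2_def using vr ar ii by blast
      have t2: "\<forall>a'. r i1 \<le> a' \<and> a' < r (Suc i1) \<longrightarrow> R2 i1 \<le> a' \<and> a' < R2 (Suc i1)"
        using type2[OF vr o ar[unfolded ii]] unfolding R2_def by blast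
      have "gam M a z \<le> l \<or> (\<exists>w a'. r i1 \<le> a' \<and> a' < r (Suc i1) \<and> M a' w \<and> w < z \<and> gam M a z \<le> gam M a w + l)"
        using lemB[OF only2 dif vr c0 cs cf ij(2) ar[unfolded ii] zc empty[unfolded ii] nc] .
      thus ?thesis
      proof
        assume "gam M a z \<le> l" thus ?thesis unfolding g_def by simp
      next
        assume "\<exists>w a'. r i1 \<le> a' \<and> a' < r (Suc i1) \<and> M a' w \<and> w < z \<and> gam M a z \<le> gam M a w + l"
        then obtain w a2 where ww: "r i1 \<le> a2" "a2 < r (Suc i1)" "M a2 w" "w < z" "gam M a z \<le> gam M a w + l" by blast
        have rr: "R2 i1 \<le> a2 \<and> a2 < R2 (Suc i1)" using t2 ww(1,2) by blast
        have "w < n" using ww(4) zn by simp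
        hence "w \<in> Z2" unfolding Z2_def using rr ww(3) by blast
        hence "g w \<in> G2" unfolding G2_def using E by simp
        moreover have "g w \<le> g z" unfolding g_def using gam_mono ww(4) by simp
        moreover have "g z \<le> g w + l" using ww(5) unfolding g_def .
        ultimately have "g z \<in> T2" unfolding T2_def by (intro UN_I[of "g w"]) auto
        thus ?thesis by simp
      qed
    qed
  qed
  define S where "S = {b. b < n \<and> \<not> M a b \<and> (b = 0 \<or> M a (b - 1))}"
  have rcS: "row_complexity M n a = card S" unfolding row_complexity_def S_def by simp
  have mono: "\<And>b b'. b \<in> S \<Longrightarrow> b' \<in> S \<Longrightarrow> b < b' \<Longrightarrow> g b < g b'"
  proof -
    fix b b' assume "b \<in> S" "b' \<in> S" "b < b'"
    hence "M a (b' - 1)" "0 < b'" unfolding S_def by auto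
    thus "g b < g b'" unfolding g_def using gam_strict \<open>b < b'\<close> by blast
  qed
  have inj: "inj_on g S"
  proof (rule inj_onI)
    fix b b' assume h: "b \<in> S" "b' \<in> S" "g b = g b'"
    show "b = b'"
    proof (rule ccontr)
      assume "b \<noteq> b'"
      hence "b < b' \<or> b' < b" by arith
      thus False using mono h by fastforce
    qed
  qed
  have sub: "g ` S \<subseteq> {..l} \<union> T1 \<union> T2" using key unfolding S_def by blast
  have fT1: "finite T1" unfolding T1_def using fG1 by simp
  have fT2: "finite T2" unfolding T2_def using fG2 by simp
  have cT1: "card T1 \<le> l * Suc l"
  proof -
    have "card T1 \<le> (\<Sum>x\<in>G1. card {x..x+l})" unfolding T1_def by (rule card_UN_le[OF fG1])
    also have "\<dots> = card G1 * Suc l" by simp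
    also have "\<dots> \<le> l * Suc l" using cG1 by (rule mult_le_mono1)
    finally show ?thesis .
  qed
  have cT2: "card T2 \<le> l * Suc l"
  proof -
    have "card T2 \<le> (\<Sum>x\<in>G2. card {x..x+l})" unfolding T2_def by (rule card_UN_le[OF fG2])
    also have "\<dots> = card G2 * Suc l" by simp
    also have "\<dots> \<le> l * Suc l" using cG2 by (rule mult_le_mono1)
    finally show ?thesis .
  qed
  have fU: "finite ({..l} \<union> T1 \<union> T2)" using fT1 fT2 by simp
  have "card S = card (g ` S)" using card_image[OF inj] by simp
  also have "\<dots> \<le> card ({..l} \<union> T1 \<union> T2)" by (rule card_mono[OF fU sub])
  also have "\<dots> \<le> card ({..l} \<union> T1) + card T2" by (rule card_Un_le)
  also have "\<dots> \<le> card {..l} + card T1 + card T2" using card_Un_le[of "{..l}" T1] by linarith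
  also have "\<dots> \<le> Suc l + 2 * (l * Suc l)" using cT1 cT2 by simp
  finally show ?thesis using rcS by simp
qed

theorem lemma3p14:
  fixes P :: bmat and k l :: nat
  assumes "card {i. i < k \<and> nonempty_row P l i} = 2"
  shows "row_bounding P k l"
proof -
  have "\<exists>x y. {i. i < k \<and> nonempty_row P l i} = {x, y} \<and> x \<noteq> y"
    using assms by (simp only: card_2_iff)
  then obtain x y where xy: "{i. i < k \<and> nonempty_row P l i} = {x, y}" "x \<noteq> y" by blast
  have "x \<in> {i. i < k \<and> nonempty_row P l i}" "y \<in> {i. i < k \<and> nonempty_row P l i}" using xy(1) by simp_all
  hence xk: "x < k" "nonempty_row P l x" "y < k" "nonempty_row P l y" by simp_all
  define i1 where "i1 = min x y"
  define i2 where "i2 = max x y"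
  have o: "i1 < i2" "i2 < k" unfolding i1_def i2_def using xy(2) xk by auto
  have only: "\<forall>i<k. \<forall>t<l. P i t \<longrightarrow> i = i1 \<or> i = i2"
  proof (intro allI impI)
    fix i t assume "i < k" "t < l" "P i t"
    hence "i \<in> {i. i < k \<and> nonempty_row P l i}" unfolding nonempty_row_def by blast
    hence "i = x \<or> i = y" using xy(1) by blast
    thus "i = i1 \<or> i = i2" unfolding i1_def i2_def by auto
  qed
  have l: "0 < l" using xk(2) unfolding nonempty_row_def by auto
  have "\<forall>M m n. critical P k l M m n \<longrightarrow> (\<forall>a<m. row_complexity M n a \<le> Suc l + 2 * (l * Suc l))"
    using row_bound[OF only o l] by simp
  thus ?thesis unfolding row_bounding_def by (rule exI)
qed

end
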